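(* Let $m,n$ be positive integers. There is an explicit bijection between the set of $m\times n$ partial alternating sign matrices and the set of $(m,n)$-partial height-function matrices.
   Context: An $m\times n$ partial alternating sign matrix is an $m\times n$ matrix with entries in $\{-1,0,1\}$ such that: the entries of each row and of each column sum to $0$ or $1$; the nonzero entries in each row and in each column alternate in sign; in each column the first (topmost) nonzero entry, if any, is $1$, and in each row the last (rightmost) nonzero entry, if any, is $1$. An $(m,n)$-partial height-function matrix is an integer matrix $(h_{i,j})_{0\le i\le m,\,0\le j\le n}$ with all entries nonnegative, $h_{0,k}=k$ for $0\le k\le n$, $h_{\ell,0}=\ell$ for $0\le \ell\le m$, and such that any two horizontally or vertically adjacent entries differ by exactly $1$. *)

theory Defs
  imports Main
begin

text \<open>An m x n partial ASM uses
  indices 1..m (rows) and 1..n (columns); entries outside are required to be 0,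
  so that each matrix has a unique representation.\<close>

definition partial_asm :: "nat \<Rightarrow> nat \<Rightarrow> (nat \<Rightarrow> nat \<Rightarrow> int) \<Rightarrow> bool" where
  "partial_asm m n a \<longleftrightarrow>
     (\<forall>i j. \<not> (i \<in> {1..m} \<and> j \<in> {1..n}) \<longrightarrow> a i j = 0) \<and>
     (\<forall>i\<in>{1..m}. \<forall>j\<in>{1..n}. a i j \<in> {-1, 0, 1}) \<and>
     (\<forall>i\<in>{1..m}. (\<Sum>j=1..n. a i j) \<in> {0, 1}) \<and>
     (\<forall>j\<in>{1..n}. (\<Sum>i=1..m. a i j) \<in> {0, 1}) \<and>
     \<comment> \<open>nonzero entries of each row alternate in sign\<close>
     (\<forall>i\<in>{1..m}. \<forall>j1\<in>{1..n}. \<forall>j2\<in>{1..n}.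
        j1 < j2 \<and> a i j1 \<noteq> 0 \<and> a i j2 \<noteq> 0 \<and> (\<forall>j. j1 < j \<and> j < j2 \<longrightarrow> a i j = 0)
        \<longrightarrow> a i j2 = - a i j1) \<and>
     \<comment> \<open>nonzero entries of each column alternate in sign\<close>
     (\<forall>j\<in>{1..n}. \<forall>i1\<in>{1..m}. \<forall>i2\<in>{1..m}.
        i1 < i2 \<and> a i1 j \<noteq> 0 \<and> a i2 j \<noteq> 0 \<and> (\<forall>i. i1 < i \<and> i < i2 \<longrightarrow> a i j = 0)
        \<longrightarrow> a i2 j = - a i1 j) \<and>
     \<comment> \<open>topmost nonzero entry of each column is 1\<close>
     (\<forall>j\<in>{1..n}. \<forall>i\<in>{1..m}.
        a i j \<noteq> 0 \<and> (\<forall>i'. 1 \<le> i' \<and> i' < i \<longrightarrow> a i' j = 0) \<longrightarrow> a i j = 1) \<and>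
     \<comment> \<open>rightmost nonzero entry of each row is 1\<close>
     (\<forall>i\<in>{1..m}. \<forall>j\<in>{1..n}.
        a i j \<noteq> 0 \<and> (\<forall>j'. j < j' \<and> j' \<le> n \<longrightarrow> a i j' = 0) \<longrightarrow> a i j = 1)"

definition partial_hfm :: "nat \<Rightarrow> nat \<Rightarrow> (nat \<Rightarrow> nat \<Rightarrow> int) \<Rightarrow> bool" where
  "partial_hfm m n h \<longleftrightarrow>
     (\<forall>i j. \<not> (i \<le> m \<and> j \<le> n) \<longrightarrow> h i j = 0) \<and>
     (\<forall>i\<le>m. \<forall>j\<le>n. h i j \<ge> 0) \<and>
     (\<forall>k\<le>n. h 0 k = int k) \<and>
     (\<forall>l\<le>m. h l 0 = int l) \<and>
     (\<forall>i\<le>m. \<forall>j<n. \<bar>h i (Suc j) - h i j\<bar> = 1) \<and>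
     (\<forall>i<m. \<forall>j\<le>n. \<bar>h (Suc i) j - h i j\<bar> = 1)"

definition partial_asms :: "nat \<Rightarrow> nat \<Rightarrow> (nat \<Rightarrow> nat \<Rightarrow> int) set" where
  "partial_asms m n = {a. partial_asm m n a}"

definition partial_hfms :: "nat \<Rightarrow> nat \<Rightarrow> (nat \<Rightarrow> nat \<Rightarrow> int) set" where
  "partial_hfms m n = {h. partial_hfm m n h}"

end

theory Submission
  imports Defs
begin

definition good :: "nat \<Rightarrow> (nat \<Rightarrow> int) \<Rightarrow> bool" where
 "good N x \<longleftrightarrow> (\<forall>k\<in>{1..N}. x k \<in> {-1,0,1}) \<and>
   (\<forall>k1\<in>{1..N}. \<forall>k2\<in>{1..N}. k1 < k2 \<and> x k1 \<noteq> 0 \<and> x k2 \<noteq> 0 \<and> (\<forall>k. k1 < k \<and> k < k2 \<longrightarrow> x k = 0) \<longrightarrow> x k2 = - x k1) \<and>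
   (\<forall>k\<in>{1..N}. x k \<noteq> 0 \<and> (\<forall>k'. 1 \<le> k' \<and> k' < k \<longrightarrow> x k' = 0) \<longrightarrow> x k = 1)"

definition rowc :: "nat \<Rightarrow> (nat \<Rightarrow> int) \<Rightarrow> bool" where
 "rowc N y \<longleftrightarrow> (\<forall>j\<in>{1..N}. y j \<in> {-1,0,1}) \<and>
   (\<forall>j1\<in>{1..N}. \<forall>j2\<in>{1..N}. j1 < j2 \<and> y j1 \<noteq> 0 \<and> y j2 \<noteq> 0 \<and> (\<forall>j. j1 < j \<and> j < j2 \<longrightarrow> y j = 0) \<longrightarrow> y j2 = - y j1) \<and>
   (\<forall>j\<in>{1..N}. y j \<noteq> 0 \<and> (\<forall>j'. j < j' \<and> j' \<le> N \<longrightarrow> y j' = 0) \<longrightarrow> y j = 1)"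

lemma prefix01_aux:
  assumes g: "good N x"
  shows "K \<le> N \<Longrightarrow> ((\<Sum>k=1..K. x k) = 0 \<and> ((\<forall>k\<in>{1..K}. x k = 0) \<or> (\<exists>k\<in>{1..K}. x k = -1 \<and> (\<forall>k'. k < k' \<and> k' \<le> K \<longrightarrow> x k' = 0))))
      \<or> ((\<Sum>k=1..K. x k) = 1 \<and> (\<exists>k\<in>{1..K}. x k = 1 \<and> (\<forall>k'. k < k' \<and> k' \<le> K \<longrightarrow> x k' = 0)))"
proof (induction K)
  case 0 then show ?case by simp
next
  case (Suc K)
  from g have vals: "\<forall>k\<in>{1..N}. x k \<in> {-1,0,1}"
   and alt: "\<forall>k1\<in>{1..N}. \<forall>k2\<in>{1..N}. k1 < k2 \<and> x k1 \<noteq> 0 \<and> x k2 \<noteq> 0 \<and> (\<forall>k. k1 < k \<and> k < k2 \<longrightarrow> x k = 0) \<longrightarrow> x k2 = - x k1"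
   and fst: "\<forall>k\<in>{1..N}. x k \<noteq> 0 \<and> (\<forall>k'. 1 \<le> k' \<and> k' < k \<longrightarrow> x k' = 0) \<longrightarrow> x k = 1"
    unfolding good_def by blast+
  let ?S = "\<Sum>k=1..K. x k"
  have S: "(\<Sum>k=1..Suc K. x k) = ?S + x (Suc K)" by simp
  have KN: "K \<le> N" "Suc K \<in> {1..N}" using Suc.prems by auto
  have IH: "(?S = 0 \<and> ((\<forall>k\<in>{1..K}. x k = 0) \<or> (\<exists>k\<in>{1..K}. x k = -1 \<and> (\<forall>k'. k < k' \<and> k' \<le> K \<longrightarrow> x k' = 0))))
      \<or> (?S = 1 \<and> (\<exists>k\<in>{1..K}. x k = 1 \<and> (\<forall>k'. k < k' \<and> k' \<le> K \<longrightarrow> x k' = 0)))"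
    using Suc.IH KN by blast
  show ?case
  proof (cases "x (Suc K) = 0")
    case True
    have ext: "\<And>k. (\<forall>k'. k < k' \<and> k' \<le> K \<longrightarrow> x k' = 0) \<Longrightarrow> (\<forall>k'. k < k' \<and> k' \<le> Suc K \<longrightarrow> x k' = 0)"
      using True le_Suc_eq by auto
    have ext2: "(\<forall>k\<in>{1..K}. x k = 0) \<Longrightarrow> (\<forall>k\<in>{1..Suc K}. x k = 0)"
      using True le_Suc_eq by auto
    from IH show ?thesis
    proof
      assume A: "?S = 0 \<and> ((\<forall>k\<in>{1..K}. x k = 0) \<or> (\<exists>k\<in>{1..K}. x k = -1 \<and> (\<forall>k'. k < k' \<and> k' \<le> K \<longrightarrow> x k' = 0)))"
      then have "(\<forall>k\<in>{1..Suc K}. x k = 0) \<or> (\<exists>k\<in>{1..Suc K}. x k = -1 \<and> (\<forall>k'. k < k' \<and> k' \<le> Suc K \<longrightarrow> x k' = 0))"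
        using ext ext2 by fastforce
      then show ?thesis using A S True by simp
    next
      assume A: "?S = 1 \<and> (\<exists>k\<in>{1..K}. x k = 1 \<and> (\<forall>k'. k < k' \<and> k' \<le> K \<longrightarrow> x k' = 0))"
      then have "(\<exists>k\<in>{1..Suc K}. x k = 1 \<and> (\<forall>k'. k < k' \<and> k' \<le> Suc K \<longrightarrow> x k' = 0))"
        using ext by fastforce
      then show ?thesis using A S True by simp
    qed
  next
    case False
    have last: "\<forall>k'. Suc K < k' \<and> k' \<le> Suc K \<longrightarrow> x k' = 0" by auto
    from IH consider (z) "?S = 0" "\<forall>k\<in>{1..K}. x k = 0"
      | (mi) k where "?S = 0" "k\<in>{1..K}" "x k = -1" "\<forall>k'. k < k' \<and> k' \<le> K \<longrightarrow> x k' = 0"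
      | (on) k where "?S = 1" "k\<in>{1..K}" "x k = 1" "\<forall>k'. k < k' \<and> k' \<le> K \<longrightarrow> x k' = 0"
      by blast
    then show ?thesis
    proof cases
      case z
      have "\<forall>k'. 1 \<le> k' \<and> k' < Suc K \<longrightarrow> x k' = 0" using z(2) by auto
      then have "x (Suc K) = 1" using fst[rule_format, of "Suc K"] KN False by simp
      then show ?thesis using S z last by auto
    next
      case mi
      have "\<forall>k'. k < k' \<and> k' < Suc K \<longrightarrow> x k' = 0" using mi(4) by auto
      moreover have "k \<in> {1..N}" "k < Suc K" using mi(2) KN by auto
      ultimately have "x (Suc K) = - x k" using alt[rule_format, of k "Suc K"] KN False mi(3) by simp
      then have "x (Suc K) = 1" using mi(3) by simp
      then show ?thesis using S mi last by auto
    next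
      case on
      have "\<forall>k'. k < k' \<and> k' < Suc K \<longrightarrow> x k' = 0" using on(4) by auto
      moreover have "k \<in> {1..N}" "k < Suc K" using on(2) KN by auto
      ultimately have "x (Suc K) = - x k" using alt[rule_format, of k "Suc K"] KN False on(3) by simp
      then have "x (Suc K) = -1" using on(3) by simp
      then show ?thesis using S on last by auto
    qed
  qed
qed

lemma prefix01:
  assumes "good N x" "K \<le> N"
  shows "(\<Sum>k=1..K. x k) \<in> {0,1}"
  using prefix01_aux[OF assms] by auto

lemma asm_parts:
  assumes "partial_asm m n a"
  shows asm_zero0: "\<forall>i j. \<not> (i \<in> {1..m} \<and> j \<in> {1..n}) \<longrightarrow> a i j = 0"
  and asm_v: "\<forall>i\<in>{1..m}. \<forall>j\<in>{1..n}. a i j \<in> {-1, 0, 1}"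
  and asm_ra: "\<forall>i\<in>{1..m}. \<forall>j1\<in>{1..n}. \<forall>j2\<in>{1..n}.
        j1 < j2 \<and> a i j1 \<noteq> 0 \<and> a i j2 \<noteq> 0 \<and> (\<forall>j. j1 < j \<and> j < j2 \<longrightarrow> a i j = 0)
        \<longrightarrow> a i j2 = - a i j1"
  and asm_ca: "\<forall>j\<in>{1..n}. \<forall>i1\<in>{1..m}. \<forall>i2\<in>{1..m}.
        i1 < i2 \<and> a i1 j \<noteq> 0 \<and> a i2 j \<noteq> 0 \<and> (\<forall>i. i1 < i \<and> i < i2 \<longrightarrow> a i j = 0)
        \<longrightarrow> a i2 j = - a i1 j"
  and asm_top: "\<forall>j\<in>{1..n}. \<forall>i\<in>{1..m}.
        a i j \<noteq> 0 \<and> (\<forall>i'. 1 \<le> i' \<and> i' < i \<longrightarrow> a i' j = 0) \<longrightarrow> a i j = 1"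
  and asm_rm: "\<forall>i\<in>{1..m}. \<forall>j\<in>{1..n}.
        a i j \<noteq> 0 \<and> (\<forall>j'. j < j' \<and> j' \<le> n \<longrightarrow> a i j' = 0) \<longrightarrow> a i j = 1"
  using assms unfolding partial_asm_def by auto

lemma asm_row: assumes "partial_asm m n a" "i\<in>{1..m}" shows "rowc n (a i)"
proof -
  note p = asm_parts[OF assms(1)]
  have "\<forall>j\<in>{1..n}. a i j \<in> {-1,0,1}" using p(2) assms(2) by blast
  moreover have "\<forall>j1\<in>{1..n}. \<forall>j2\<in>{1..n}. j1 < j2 \<and> a i j1 \<noteq> 0 \<and> a i j2 \<noteq> 0 \<and> (\<forall>j. j1 < j \<and> j < j2 \<longrightarrow> a i j = 0) \<longrightarrow> a i j2 = - a i j1"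
    using p(3) assms(2) by blast
  moreover have "\<forall>j\<in>{1..n}. a i j \<noteq> 0 \<and> (\<forall>j'. j < j' \<and> j' \<le> n \<longrightarrow> a i j' = 0) \<longrightarrow> a i j = 1"
    using p(6) assms(2) by blast
  ultimately show ?thesis unfolding rowc_def by blast
qed

lemma asm_col: assumes "partial_asm m n a" "j\<in>{1..n}" shows "good m (\<lambda>i. a i j)"
proof -
  note p = asm_parts[OF assms(1)]
  have "\<forall>i\<in>{1..m}. a i j \<in> {-1,0,1}" using p(2) assms(2) by blast
  moreover have "\<forall>i1\<in>{1..m}. \<forall>i2\<in>{1..m}. i1 < i2 \<and> a i1 j \<noteq> 0 \<and> a i2 j \<noteq> 0 \<and> (\<forall>i. i1 < i \<and> i < i2 \<longrightarrow> a i j = 0) \<longrightarrow> a i2 j = - a i1 j"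
    using p(4) assms(2) by blast
  moreover have "\<forall>i\<in>{1..m}. a i j \<noteq> 0 \<and> (\<forall>i'. 1 \<le> i' \<and> i' < i \<longrightarrow> a i' j = 0) \<longrightarrow> a i j = 1"
    using p(5) assms(2) by blast
  ultimately show ?thesis unfolding good_def by blast
qed

lemma asm_intro:
  assumes "\<forall>i j. \<not> (i \<in> {1..m} \<and> j \<in> {1..n}) \<longrightarrow> a i j = 0"
  "\<forall>i\<in>{1..m}. (\<Sum>j=1..n. a i j) \<in> {0, 1}"
  "\<forall>j\<in>{1..n}. (\<Sum>i=1..m. a i j) \<in> {0, 1}"
  "\<forall>i\<in>{1..m}. rowc n (a i)" "\<forall>j\<in>{1..n}. good m (\<lambda>i. a i j)"
  shows "partial_asm m n a"
proof -
  have r: "\<And>i. i\<in>{1..m} \<Longrightarrow> rowc n (a i)" and c: "\<And>j. j\<in>{1..n} \<Longrightarrow> good m (\<lambda>i. a i j)"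
    using assms by auto
  show ?thesis unfolding partial_asm_def
  proof (intro conjI)
    show "\<forall>i\<in>{1..m}. \<forall>j\<in>{1..n}. a i j \<in> {- 1, 0, 1}" using r unfolding rowc_def by blast
    show "\<forall>i\<in>{1..m}. \<forall>j1\<in>{1..n}. \<forall>j2\<in>{1..n}.
        j1 < j2 \<and> a i j1 \<noteq> 0 \<and> a i j2 \<noteq> 0 \<and> (\<forall>j. j1 < j \<and> j < j2 \<longrightarrow> a i j = 0)
        \<longrightarrow> a i j2 = - a i j1" using r unfolding rowc_def by blast
    show "\<forall>i\<in>{1..m}. \<forall>j\<in>{1..n}.
        a i j \<noteq> 0 \<and> (\<forall>j'. j < j' \<and> j' \<le> n \<longrightarrow> a i j' = 0) \<longrightarrow> a i j = 1"
      using r unfolding rowc_def by blast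
    show "\<forall>j\<in>{1..n}. \<forall>i1\<in>{1..m}. \<forall>i2\<in>{1..m}.
        i1 < i2 \<and> a i1 j \<noteq> 0 \<and> a i2 j \<noteq> 0 \<and> (\<forall>i. i1 < i \<and> i < i2 \<longrightarrow> a i j = 0)
        \<longrightarrow> a i2 j = - a i1 j" using c unfolding good_def by blast
    show "\<forall>j\<in>{1..n}. \<forall>i\<in>{1..m}.
        a i j \<noteq> 0 \<and> (\<forall>i'. 1 \<le> i' \<and> i' < i \<longrightarrow> a i' j = 0) \<longrightarrow> a i j = 1"
      using c unfolding good_def by blast
  qed (use assms in auto)
qed


lemma good_cong: assumes "\<forall>k\<in>{1..N}. x k = y k" "good N x" shows "good N y"
proof -
  have e: "\<And>k. k \<in> {1..N} \<Longrightarrow> y k = x k" using assms(1) by auto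
  have v: "\<forall>k\<in>{1..N}. x k \<in> {-1,0,1}"
   and alt: "\<forall>k1\<in>{1..N}. \<forall>k2\<in>{1..N}. k1 < k2 \<and> x k1 \<noteq> 0 \<and> x k2 \<noteq> 0 \<and> (\<forall>k. k1 < k \<and> k < k2 \<longrightarrow> x k = 0) \<longrightarrow> x k2 = - x k1"
   and fst: "\<forall>k\<in>{1..N}. x k \<noteq> 0 \<and> (\<forall>k'. 1 \<le> k' \<and> k' < k \<longrightarrow> x k' = 0) \<longrightarrow> x k = 1"
    using assms(2) unfolding good_def by blast+
  show ?thesis unfolding good_def
  proof (intro conjI ballI impI)
    fix k assume "k \<in> {1..N}" then show "y k \<in> {-1,0,1}" using v e by auto
  next
    fix k1 k2 assume k: "k1 \<in> {1..N}" "k2 \<in> {1..N}"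
      and h: "k1 < k2 \<and> y k1 \<noteq> 0 \<and> y k2 \<noteq> 0 \<and> (\<forall>k. k1 < k \<and> k < k2 \<longrightarrow> y k = 0)"
    have "\<forall>k. k1 < k \<and> k < k2 \<longrightarrow> x k = 0"
    proof (intro allI impI)
      fix k assume "k1 < k \<and> k < k2" then show "x k = 0" using h k e[of k] by auto
    qed
    then show "y k2 = - y k1" using alt k h e[OF k(1)] e[OF k(2)] by auto
  next
    fix k assume k: "k \<in> {1..N}" and h: "y k \<noteq> 0 \<and> (\<forall>k'. 1 \<le> k' \<and> k' < k \<longrightarrow> y k' = 0)"
    have "\<forall>k'. 1 \<le> k' \<and> k' < k \<longrightarrow> x k' = 0"
    proof (intro allI impI)
      fix k' assume "1 \<le> k' \<and> k' < k" then show "x k' = 0" using h k e[of k'] by auto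
    qed
    then show "y k = 1" using fst k h e[OF k] by auto
  qed
qed

lemma rowc_to_good: assumes "rowc n y" shows "good n (\<lambda>k. y (n+1-k))"
proof -
  have v: "\<forall>j\<in>{1..n}. y j \<in> {-1,0,1}"
   and alt: "\<forall>j1\<in>{1..n}. \<forall>j2\<in>{1..n}. j1 < j2 \<and> y j1 \<noteq> 0 \<and> y j2 \<noteq> 0 \<and> (\<forall>j. j1 < j \<and> j < j2 \<longrightarrow> y j = 0) \<longrightarrow> y j2 = - y j1"
   and rm: "\<forall>j\<in>{1..n}. y j \<noteq> 0 \<and> (\<forall>j'. j < j' \<and> j' \<le> n \<longrightarrow> y j' = 0) \<longrightarrow> y j = 1"
    using assms unfolding rowc_def by blast+
  show ?thesis unfolding good_def
  proof (intro conjI ballI impI)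
    fix k assume "k \<in> {1..n}" then have "n+1-k \<in> {1..n}" by auto
    then show "y (n+1-k) \<in> {-1,0,1}" using v by blast
  next
    fix k1 k2 assume k: "k1 \<in> {1..n}" "k2 \<in> {1..n}"
      and h: "k1 < k2 \<and> y (n+1-k1) \<noteq> 0 \<and> y (n+1-k2) \<noteq> 0 \<and> (\<forall>k. k1 < k \<and> k < k2 \<longrightarrow> y (n+1-k) = 0)"
    have b: "\<forall>j. n+1-k2 < j \<and> j < n+1-k1 \<longrightarrow> y j = 0"
    proof (intro allI impI)
      fix j assume j: "n+1-k2 < j \<and> j < n+1-k1"
      then have "k1 < n+1-j \<and> n+1-j < k2" using k by auto
      then have "y (n+1-(n+1-j)) = 0" using h by blast
      moreover have "n+1-(n+1-j) = j" using j k by auto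
      ultimately show "y j = 0" by simp
    qed
    have "n+1-k2 \<in> {1..n}" "n+1-k1 \<in> {1..n}" "n+1-k2 < n+1-k1" using k h by auto
    then have "y (n+1-k1) = - y (n+1-k2)" using alt b h by blast
    then show "y (n+1-k2) = - y (n+1-k1)" by simp
  next
    fix k assume k: "k \<in> {1..n}" and h: "y (n+1-k) \<noteq> 0 \<and> (\<forall>k'. 1 \<le> k' \<and> k' < k \<longrightarrow> y (n+1-k') = 0)"
    have b: "\<forall>j'. n+1-k < j' \<and> j' \<le> n \<longrightarrow> y j' = 0"
    proof (intro allI impI)
      fix j assume j: "n+1-k < j \<and> j \<le> n"
      then have "1 \<le> n+1-j \<and> n+1-j < k" using k by auto
      then have "y (n+1-(n+1-j)) = 0" using h by blast
      moreover have "n+1-(n+1-j) = j" using j k by auto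
      ultimately show "y j = 0" by simp
    qed
    have "n+1-k \<in> {1..n}" using k by auto
    then show "y (n+1-k) = 1" using rm b h by blast
  qed
qed

lemma good_to_rowc: assumes "good n z" "\<forall>j\<in>{1..n}. y j = z (n+1-j)" shows "rowc n y"
proof -
  have e: "\<And>j. j \<in> {1..n} \<Longrightarrow> y j = z (n+1-j)" using assms(2) by auto
  have v: "\<forall>k\<in>{1..n}. z k \<in> {-1,0,1}"
   and alt: "\<forall>k1\<in>{1..n}. \<forall>k2\<in>{1..n}. k1 < k2 \<and> z k1 \<noteq> 0 \<and> z k2 \<noteq> 0 \<and> (\<forall>k. k1 < k \<and> k < k2 \<longrightarrow> z k = 0) \<longrightarrow> z k2 = - z k1"
   and fst: "\<forall>k\<in>{1..n}. z k \<noteq> 0 \<and> (\<forall>k'. 1 \<le> k' \<and> k' < k \<longrightarrow> z k' = 0) \<longrightarrow> z k = 1"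
    using assms(1) unfolding good_def by blast+
  show ?thesis unfolding rowc_def
  proof (intro conjI ballI impI)
    fix j assume j: "j \<in> {1..n}" then have "n+1-j \<in> {1..n}" by auto
    then show "y j \<in> {-1,0,1}" using v e[OF j] by simp
  next
    fix j1 j2 assume j: "j1 \<in> {1..n}" "j2 \<in> {1..n}"
      and h: "j1 < j2 \<and> y j1 \<noteq> 0 \<and> y j2 \<noteq> 0 \<and> (\<forall>j. j1 < j \<and> j < j2 \<longrightarrow> y j = 0)"
    have b: "\<forall>k. n+1-j2 < k \<and> k < n+1-j1 \<longrightarrow> z k = 0"
    proof (intro allI impI)
      fix k assume k: "n+1-j2 < k \<and> k < n+1-j1"
      then have "j1 < n+1-k \<and> n+1-k < j2" using j by auto
      then have "y (n+1-k) = 0" using h by blast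
      moreover have "n+1-k \<in> {1..n}" using k j by auto
      moreover have "n+1-(n+1-k) = k" using j k by auto
      ultimately show "z k = 0" using e[of "n+1-k"] by simp
    qed
    have "n+1-j2 \<in> {1..n}" "n+1-j1 \<in> {1..n}" "n+1-j2 < n+1-j1" using j h by auto
    moreover have "z (n+1-j1) \<noteq> 0" "z (n+1-j2) \<noteq> 0" using h e j by auto
    ultimately have "z (n+1-j1) = - z (n+1-j2)" using alt b by blast
    then show "y j2 = - y j1" using e j by simp
  next
    fix j assume j: "j \<in> {1..n}" and h: "y j \<noteq> 0 \<and> (\<forall>j'. j < j' \<and> j' \<le> n \<longrightarrow> y j' = 0)"
    have b: "\<forall>k'. 1 \<le> k' \<and> k' < n+1-j \<longrightarrow> z k' = 0"
    proof (intro allI impI)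
      fix k assume k: "1 \<le> k \<and> k < n+1-j"
      then have "j < n+1-k \<and> n+1-k \<le> n" using j by auto
      then have "y (n+1-k) = 0" using h by blast
      moreover have "n+1-k \<in> {1..n}" using k j by auto
      moreover have "n+1-(n+1-k) = k" using j k by auto
      ultimately show "z k = 0" using e[of "n+1-k"] by simp
    qed
    have "n+1-j \<in> {1..n}" using j by auto
    moreover have "z (n+1-j) \<noteq> 0" using h e j by auto
    ultimately have "z (n+1-j) = 1" using fst b by blast
    then show "y j = 1" using e j by simp
  qed
qed

lemma const_run:
  fixes x :: "nat \<Rightarrow> int"
  assumes "\<forall>k. a < k \<and> k < b \<longrightarrow> x k - x (k-1) = 0"
  shows "a \<le> c \<Longrightarrow> c < b \<Longrightarrow> x c = x a"
proof (induction c)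
  case 0 then show ?case by simp
next
  case (Suc c)
  show ?case
  proof (cases "a = Suc c")
    case True then show ?thesis by simp
  next
    case False
    then have "a \<le> c" "a < Suc c" using Suc.prems by auto
    then have "x c = x a" using Suc by auto
    moreover have "x (Suc c) - x c = 0" using assms Suc.prems \<open>a < Suc c\<close> by fastforce
    ultimately show ?thesis by simp
  qed
qed

lemma diff01:
  fixes x :: "nat \<Rightarrow> int"
  assumes v: "\<forall>k\<le>N. x k \<in> {0,1}" and x0: "x 0 = 0"
  shows "good N (\<lambda>k. x k - x (k-1))"
  unfolding good_def
proof (intro conjI ballI impI)
  fix k assume "k \<in> {1..N}"
  then have "k \<le> N" "k-1 \<le> N" by auto
  then have "x k \<in> {0,1}" "x (k-1) \<in> {0,1}" using v by blast+
  then show "x k - x (k-1) \<in> {-1,0,1}" by auto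
next
  fix k1 k2 assume k: "k1 \<in> {1..N}" "k2 \<in> {1..N}"
    and h: "k1 < k2 \<and> x k1 - x (k1-1) \<noteq> 0 \<and> x k2 - x (k2-1) \<noteq> 0 \<and> (\<forall>k. k1 < k \<and> k < k2 \<longrightarrow> x k - x (k-1) = 0)"
  have "x (k2-1) = x k1" using const_run[of k1 k2 x "k2-1"] h by auto
  moreover have kk: "k1 \<le> N" "k1-1 \<le> N" "k2 \<le> N" using k by auto
  moreover have "x k1 \<in> {0,1}" "x (k1-1) \<in> {0,1}" "x k2 \<in> {0,1}" using v kk by blast+
  moreover have "x k1 - x (k1-1) \<noteq> 0" "x k2 - x (k2-1) \<noteq> 0" using h by auto
  ultimately show "x k2 - x (k2-1) = - (x k1 - x (k1-1))" by auto
next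
  fix k assume k: "k \<in> {1..N}"
    and h: "x k - x (k-1) \<noteq> 0 \<and> (\<forall>k'. 1 \<le> k' \<and> k' < k \<longrightarrow> x k' - x (k'-1) = 0)"
  have "x (k-1) = x 0" using const_run[of 0 k x "k-1"] h k by force
  moreover have "x k \<in> {0,1}" using v k by auto
  moreover have "x k - x (k-1) \<noteq> 0" using h by auto
  ultimately show "x k - x (k-1) = 1" using x0 by auto
qed

lemma telescope:
  fixes x :: "nat \<Rightarrow> int"
  shows "(\<Sum>k=1..K. x k - x (k-1)) = x K - x 0"
  by (induction K) auto

lemma sum_rev1:
  fixes f :: "nat \<Rightarrow> int"
  shows "(\<Sum>j=1..n. f j) = (\<Sum>k=1..n. f (n+1-k))"
  using sum.atLeastAtMost_rev[of f 1 n] by simp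


definition Pm :: "nat \<Rightarrow> (nat \<Rightarrow> nat \<Rightarrow> int) \<Rightarrow> nat \<Rightarrow> nat \<Rightarrow> int" where
  "Pm n a i j = (\<Sum>i'=1..i. \<Sum>k=1..j. a i' (n+1-k))"
definition rowpre :: "nat \<Rightarrow> (nat \<Rightarrow> nat \<Rightarrow> int) \<Rightarrow> nat \<Rightarrow> nat \<Rightarrow> int" where
  "rowpre n a i j = (\<Sum>k=1..j. a i (n+1-k))"
definition colpre :: "nat \<Rightarrow> (nat \<Rightarrow> nat \<Rightarrow> int) \<Rightarrow> nat \<Rightarrow> nat \<Rightarrow> int" where
  "colpre n a i k = (\<Sum>i'=1..i. a i' (n+1-k))"
definition Fm :: "nat \<Rightarrow> nat \<Rightarrow> (nat \<Rightarrow> nat \<Rightarrow> int) \<Rightarrow> nat \<Rightarrow> nat \<Rightarrow> int" where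
  "Fm m n a = (\<lambda>i j. if i \<le> m \<and> j \<le> n then int i + int j - 2 * Pm n a i j else 0)"
definition cc :: "(nat \<Rightarrow> nat \<Rightarrow> int) \<Rightarrow> nat \<Rightarrow> nat \<Rightarrow> int" where
  "cc h i k = (if h i k < h i (k-1) then 1 else 0)"
definition rr :: "(nat \<Rightarrow> nat \<Rightarrow> int) \<Rightarrow> nat \<Rightarrow> nat \<Rightarrow> int" where
  "rr h i k = (if h i k < h (i-1) k then 1 else 0)"
definition Gm :: "nat \<Rightarrow> nat \<Rightarrow> (nat \<Rightarrow> nat \<Rightarrow> int) \<Rightarrow> nat \<Rightarrow> nat \<Rightarrow> int" where
  "Gm m n h = (\<lambda>i j. if i \<in> {1..m} \<and> j \<in> {1..n} then cc h i (n+1-j) - cc h (i-1) (n+1-j) else 0)"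

lemma P_rows: "Pm n a i j = (\<Sum>i'=1..i. rowpre n a i' j)"
  unfolding Pm_def rowpre_def by simp

lemma P_cols: "Pm n a i j = (\<Sum>k=1..j. colpre n a i k)"
  unfolding Pm_def colpre_def by (rule sum.swap)

lemma P_Suc_i: "Pm n a (Suc i) j = Pm n a i j + rowpre n a (Suc i) j"
  unfolding P_rows by simp

lemma P_Suc_j: "Pm n a i (Suc j) = Pm n a i j + colpre n a i (Suc j)"
  unfolding P_cols by simp

lemma P_zero: "Pm n a 0 j = 0" "Pm n a i 0 = 0"
  unfolding Pm_def by simp_all

lemma colpre_01:
  assumes "partial_asm m n a" "i \<le> m" "k \<in> {1..n}"
  shows "colpre n a i k \<in> {0,1}"
proof -
  have "n+1-k \<in> {1..n}" using assms(3) by auto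
  then have "good m (\<lambda>i. a i (n+1-k))" using asm_col[OF assms(1)] by blast
  then show ?thesis unfolding colpre_def using prefix01 assms(2) by blast
qed

lemma rowpre_01:
  assumes "partial_asm m n a" "i \<in> {1..m}" "j \<le> n"
  shows "rowpre n a i j \<in> {0,1}"
proof -
  have "good n (\<lambda>k. a i (n+1-k))" using rowc_to_good asm_row[OF assms(1,2)] by blast
  then show ?thesis unfolding rowpre_def using prefix01 assms(3) by blast
qed

lemma P_le_i:
  assumes "partial_asm m n a" "i \<le> m" "j \<le> n"
  shows "Pm n a i j \<le> int i"
proof -
  have "Pm n a i j \<le> (\<Sum>i'=1..i. (1::int))" unfolding P_rows
  proof (rule sum_mono)
    fix i' assume "i' \<in> {1..i}"
    then have "i' \<in> {1..m}" using assms by auto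
    then show "rowpre n a i' j \<le> 1" using rowpre_01[OF assms(1) _ assms(3)] by fastforce
  qed
  then show ?thesis by simp
qed

lemma P_le_j:
  assumes "partial_asm m n a" "i \<le> m" "j \<le> n"
  shows "Pm n a i j \<le> int j"
proof -
  have "Pm n a i j \<le> (\<Sum>k=1..j. (1::int))" unfolding P_cols
  proof (rule sum_mono)
    fix k assume "k \<in> {1..j}"
    then have "k \<in> {1..n}" using assms by auto
    then show "colpre n a i k \<le> 1" using colpre_01[OF assms(1,2)] by fastforce
  qed
  then show ?thesis by simp
qed

lemma Fh:
  assumes "i \<le> m" "k \<in> {1..n}"
  shows "Fm m n a i k - Fm m n a i (k-1) = 1 - 2 * colpre n a i k"
proof -
  obtain k0 where k0: "k = Suc k0" using assms(2) by (cases k) auto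
  have "k0 \<le> n" "Suc k0 \<le> n" using assms k0 by auto
  then show ?thesis using assms(1) unfolding Fm_def k0 by (simp add: P_Suc_j)
qed

lemma Fv:
  assumes "i \<in> {1..m}" "j \<le> n"
  shows "Fm m n a i j - Fm m n a (i-1) j = 1 - 2 * rowpre n a i j"
proof -
  obtain i0 where i0: "i = Suc i0" using assms(1) by (cases i) auto
  have "i0 \<le> m" "Suc i0 \<le> m" using assms i0 by auto
  then show ?thesis using assms(2) unfolding Fm_def i0 by (simp add: P_Suc_i)
qed

lemma F_in:
  assumes a: "partial_asm m n a"
  shows "partial_hfm m n (Fm m n a)"
  unfolding partial_hfm_def
proof (intro conjI allI impI)
  fix i j assume "\<not> (i \<le> m \<and> j \<le> n)" then show "Fm m n a i j = 0" unfolding Fm_def by auto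
next
  fix i j assume "i \<le> m" "j \<le> n"
  then show "Fm m n a i j \<ge> 0" using P_le_i[OF a] P_le_j[OF a] unfolding Fm_def by fastforce
next
  fix k assume "k \<le> n" then show "Fm m n a 0 k = int k" unfolding Fm_def by (simp add: P_zero)
next
  fix l assume "l \<le> m" then show "Fm m n a l 0 = int l" unfolding Fm_def by (simp add: P_zero)
next
  fix i j assume ij: "i \<le> m" "j < n"
  have "Suc j \<in> {1..n}" using ij by auto
  then have "Fm m n a i (Suc j) - Fm m n a i j = 1 - 2 * colpre n a i (Suc j)"
    using Fh[OF ij(1), of "Suc j"] by simp
  moreover have "colpre n a i (Suc j) \<in> {0,1}" using colpre_01[OF a ij(1)] \<open>Suc j \<in> {1..n}\<close> by blast
  ultimately show "\<bar>Fm m n a i (Suc j) - Fm m n a i j\<bar> = 1" by auto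
next
  fix i j assume ij: "i < m" "j \<le> n"
  have "Suc i \<in> {1..m}" using ij by auto
  then have "Fm m n a (Suc i) j - Fm m n a i j = 1 - 2 * rowpre n a (Suc i) j"
    using Fv[OF _ ij(2), of "Suc i"] by simp
  moreover have "rowpre n a (Suc i) j \<in> {0,1}" using rowpre_01[OF a _ ij(2)] \<open>Suc i \<in> {1..m}\<close> by blast
  ultimately show "\<bar>Fm m n a (Suc i) j - Fm m n a i j\<bar> = 1" by auto
qed

lemma hfm_parts:
  assumes "partial_hfm m n h"
  shows hfm_zero: "\<forall>i j. \<not> (i \<le> m \<and> j \<le> n) \<longrightarrow> h i j = 0"
  and hfm_top: "\<forall>k\<le>n. h 0 k = int k"
  and hfm_left: "\<forall>l\<le>m. h l 0 = int l"
  and hfm_h: "\<forall>i\<le>m. \<forall>j<n. \<bar>h i (Suc j) - h i j\<bar> = 1"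
  and hfm_v: "\<forall>i<m. \<forall>j\<le>n. \<bar>h (Suc i) j - h i j\<bar> = 1"
  using assms unfolding partial_hfm_def by auto

lemma hh:
  assumes "partial_hfm m n h" "i \<le> m" "k \<in> {1..n}"
  shows "h i k - h i (k-1) = 1 - 2 * cc h i k"
proof -
  obtain k0 where k0: "k = Suc k0" using assms(3) by (cases k) auto
  have "k0 < n" using assms k0 by auto
  then have "\<bar>h i (Suc k0) - h i k0\<bar> = 1" using hfm_h[OF assms(1)] assms(2) by blast
  then show ?thesis unfolding cc_def k0 by auto
qed

lemma hv:
  assumes "partial_hfm m n h" "i \<in> {1..m}" "k \<le> n"
  shows "h i k - h (i-1) k = 1 - 2 * rr h i k"
proof -
  obtain i0 where i0: "i = Suc i0" using assms(2) by (cases i) auto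
  have "i0 < m" using assms i0 by auto
  then have "\<bar>h (Suc i0) k - h i0 k\<bar> = 1" using hfm_v[OF assms(1)] assms(3) by blast
  then show ?thesis unfolding rr_def i0 by auto
qed

lemma cr:
  assumes "partial_hfm m n h" "i \<in> {1..m}" "k \<in> {1..n}"
  shows "cc h i k - cc h (i-1) k = rr h i k - rr h i (k-1)"
proof -
  have "h i k - h i (k-1) = 1 - 2 * cc h i k" using hh[OF assms(1) _ assms(3)] assms(2) by auto
  moreover have "h (i-1) k - h (i-1) (k-1) = 1 - 2 * cc h (i-1) k" using hh[OF assms(1) _ assms(3)] assms(2) by auto
  moreover have "h i k - h (i-1) k = 1 - 2 * rr h i k" using hv[OF assms(1,2)] assms(3) by auto
  moreover have "h i (k-1) - h (i-1) (k-1) = 1 - 2 * rr h i (k-1)" using hv[OF assms(1,2)] assms(3) by auto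
  ultimately show ?thesis by linarith
qed

lemma cc0: assumes "partial_hfm m n h" "k \<in> {1..n}" shows "cc h 0 k = 0"
proof -
  have "h 0 k = int k" "h 0 (k-1) = int (k-1)" using hfm_top[OF assms(1)] assms(2) by auto
  then show ?thesis unfolding cc_def using assms(2) by auto
qed

lemma rr0: assumes "partial_hfm m n h" "i \<in> {1..m}" shows "rr h i 0 = 0"
proof -
  have "h i 0 = int i" "h (i-1) 0 = int (i-1)" using hfm_left[OF assms(1)] assms(2) by auto
  then show ?thesis unfolding rr_def using assms(2) by auto
qed

lemma G_in:
  assumes h: "partial_hfm m n h"
  shows "partial_asm m n (Gm m n h)"
proof -
  have cols: "good m (\<lambda>i. Gm m n h i j)" if j: "j \<in> {1..n}" for j
  proof -
    have jj: "n+1-j \<in> {1..n}" using j by auto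
    have "good m (\<lambda>i. cc h i (n+1-j) - cc h (i-1) (n+1-j))"
      by (rule diff01) (simp add: cc_def, rule cc0[OF h jj])
    then show ?thesis by (rule good_cong[rotated]) (use j in \<open>auto simp: Gm_def\<close>)
  qed
  have rg: "good n (\<lambda>k. rr h i k - rr h i (k-1))" if i: "i \<in> {1..m}" for i
    by (rule diff01) (simp add: rr_def, rule rr0[OF h i])
  have rows_eq: "Gm m n h i j = rr h i (n+1-j) - rr h i (n+1-j-1)" if i: "i \<in> {1..m}" and j: "j \<in> {1..n}" for i j
  proof -
    have "n+1-j \<in> {1..n}" using j by auto
    then show ?thesis using cr[OF h i] i j unfolding Gm_def by auto
  qed
  have rows: "rowc n (Gm m n h i)" if i: "i \<in> {1..m}" for i
    by (rule good_to_rowc[OF rg[OF i]]) (use rows_eq[OF i] in auto)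
  show ?thesis
  proof (rule asm_intro)
    show "\<forall>i j. \<not> (i \<in> {1..m} \<and> j \<in> {1..n}) \<longrightarrow> Gm m n h i j = 0" unfolding Gm_def by auto
    show "\<forall>i\<in>{1..m}. rowc n (Gm m n h i)" using rows by blast
    show "\<forall>j\<in>{1..n}. good m (\<lambda>i. Gm m n h i j)" using cols by blast
    show "\<forall>j\<in>{1..n}. (\<Sum>i=1..m. Gm m n h i j) \<in> {0, 1}" using cols prefix01 by blast
    show "\<forall>i\<in>{1..m}. (\<Sum>j=1..n. Gm m n h i j) \<in> {0, 1}"
    proof
      fix i assume i: "i \<in> {1..m}"
      have "(\<Sum>j=1..n. Gm m n h i j) = (\<Sum>k=1..n. Gm m n h i (n+1-k))" by (rule sum_rev1)
      also have "\<dots> = (\<Sum>k=1..n. rr h i k - rr h i (k-1))"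
      proof (rule sum.cong)
        fix k assume k: "k \<in> {1..n}"
        then have "n+1-k \<in> {1..n}" "n+1-(n+1-k) = k" by auto
        then show "Gm m n h i (n+1-k) = rr h i k - rr h i (k-1)" using rows_eq[OF i, of "n+1-k"] by simp
      qed simp
      finally show "(\<Sum>j=1..n. Gm m n h i j) \<in> {0, 1}" using prefix01[OF rg[OF i]] by simp
    qed
  qed
qed

lemma GF:
  assumes a: "partial_asm m n a"
  shows "Gm m n (Fm m n a) = a"
proof (intro ext)
  fix i j
  show "Gm m n (Fm m n a) i j = a i j"
  proof (cases "i \<in> {1..m} \<and> j \<in> {1..n}")
    case False
    then show ?thesis unfolding Gm_def using asm_zero0[OF a] by auto
  next
    case True
    define k where "k = n+1-j"
    have k: "k \<in> {1..n}" "n+1-k = j" using True unfolding k_def by auto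
    have c: "cc (Fm m n a) i' k = colpre n a i' k" if "i' \<le> m" for i'
    proof -
      have "Fm m n a i' k - Fm m n a i' (k-1) = 1 - 2 * colpre n a i' k" using Fh[OF that k(1)] .
      moreover have "colpre n a i' k \<in> {0,1}" using colpre_01[OF a that k(1)] .
      ultimately show ?thesis unfolding cc_def by auto
    qed
    obtain i0 where i0: "i = Suc i0" using True by (cases i) auto
    have "Gm m n (Fm m n a) i j = colpre n a i k - colpre n a i0 k"
      using True c[of i] c[of i0] i0 unfolding Gm_def k_def by auto
    also have "\<dots> = a i j" unfolding colpre_def i0 using k by simp
    finally show ?thesis .
  qed
qed

lemma FG:
  assumes h: "partial_hfm m n h"
  shows "Fm m n (Gm m n h) = h"
proof (intro ext)
  fix i j
  show "Fm m n (Gm m n h) i j = h i j"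
  proof (cases "i \<le> m \<and> j \<le> n")
    case False
    then show ?thesis unfolding Fm_def using hfm_zero[OF h] by auto
  next
    case True
    have cp: "colpre n (Gm m n h) i k = cc h i k" if k: "k \<in> {1..j}" for k
    proof -
      have kk: "k \<in> {1..n}" "n+1-k \<in> {1..n}" "n+1-(n+1-k) = k" using k True by auto
      have "colpre n (Gm m n h) i k = (\<Sum>i'=1..i. cc h i' k - cc h (i'-1) k)"
        unfolding colpre_def
      proof (rule sum.cong)
        fix i' assume "i' \<in> {1..i}"
        then show "Gm m n h i' (n+1-k) = cc h i' k - cc h (i'-1) k" using True kk unfolding Gm_def by auto
      qed simp
      also have "\<dots> = cc h i k - cc h 0 k" by (rule telescope)
      finally show ?thesis using cc0[OF h kk(1)] by simp
    qed
    have "Pm n (Gm m n h) i j = (\<Sum>k=1..j. cc h i k)" unfolding P_cols using cp by simp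
    moreover have "h i j = int i + int j - 2 * (\<Sum>k=1..j. cc h i k)"
    proof -
      have "(\<Sum>k=1..j. h i k - h i (k-1)) = h i j - h i 0" by (rule telescope)
      moreover have "(\<Sum>k=1..j. h i k - h i (k-1)) = (\<Sum>k=1..j. 1 - 2 * cc h i k)"
        by (rule sum.cong) (use hh[OF h] True in auto)
      moreover have "(\<Sum>k=1..j. 1 - 2 * cc h i k) = int j - 2 * (\<Sum>k=1..j. cc h i k)"
        by (simp add: sum_subtractf sum_distrib_left)
      moreover have "h i 0 = int i" using hfm_left[OF h] True by auto
      ultimately show ?thesis by linarith
    qed
    ultimately show ?thesis unfolding Fm_def using True by simp
  qed
qed

theorem lemma3p10:
  fixes m n :: nat
  assumes "m \<ge> 1" and "n \<ge> 1"
  shows "\<exists>f. bij_betw f (partial_asms m n) (partial_hfms m n)"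
proof
  show "bij_betw (Fm m n) (partial_asms m n) (partial_hfms m n)"
  proof (rule bij_betw_byWitness[where f' = "Gm m n"])
    show "\<forall>a\<in>partial_asms m n. Gm m n (Fm m n a) = a" unfolding partial_asms_def using GF by blast
    show "\<forall>a'\<in>partial_hfms m n. Fm m n (Gm m n a') = a'" unfolding partial_hfms_def using FG by blast
    show "Fm m n ` partial_asms m n \<subseteq> partial_hfms m n" unfolding partial_asms_def partial_hfms_def using F_in by blast
    show "Gm m n ` partial_hfms m n \<subseteq> partial_asms m n" unfolding partial_asms_def partial_hfms_def using G_in by blast
  qed
qed

end
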